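(* Let $X=(X_1,\dots,X_k)$ be a $k$-good random valuation and let $0<\lambda_1,\dots,\lambda_k\le1$. Let $\mathcal{M}_{\lambda_1,\dots,\lambda_k}$ be the set of all IC and IR mechanisms $\mu=(q,s)$ with $q_i(x)\in[0,\lambda_i]$ for every $x\in\mathbb{R}_+^k$ and $i=1,\dots,k$. Then \[ \textsc{Rev}(X_1,\dots,X_k)=\sup_{\mu\in\mathcal{M}_{\lambda_1,\dots,\lambda_k}}R(\mu;\tilde X_1,\dots,\tilde X_k),\qquad\text{where }\tilde X_i:=X_i/\lambda_i . \]
   Context: A $k$-good random valuation is a random vector in $\mathbb{R}_+^k$. A mechanism is a pair $\mu=(q,s)$ of Borel functions $q=(q_1,\dots,q_k):\mathbb{R}_+^k\to[0,1]^k$, $s:\mathbb{R}_+^k\to\mathbb{R}$ (for members of $\mathcal{M}_{\lambda_1,\dots,\lambda_k}$, $q$ takes values in $\prod_i[0,\lambda_i]$), with buyer payoff $b(x)=q(x)\cdot x-s(x)$; IR means $b(x)\ge0$ for all $x$; IC means $b(x)\ge q(\tilde x)\cdot x-s(\tilde x)$ for all $x,\tilde x$. $R(\mu;X)=\mathbb{E}[s(X)]$ and $\textsc{Rev}(X)$ is the supremum of $R(\mu;X)$ over all IC and IR mechanisms (with $q$ valued in $[0,1]^k$). *)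

theory Defs
  imports "HOL-Probability.Probability"
begin

text \<open>Valuations live in the nonnegative orthant of real^'k (k = CARD('k)).\<close>
definition orthant :: "(real^'k) set" where
  "orthant = {x. \<forall>i. 0 \<le> x $ i}"

definition payoff :: "(real^'k \<Rightarrow> real^'k) \<Rightarrow> (real^'k \<Rightarrow> real) \<Rightarrow> real^'k \<Rightarrow> real" where
  "payoff q s x = q x \<bullet> x - s x"

definition IR :: "(real^'k \<Rightarrow> real^'k) \<Rightarrow> (real^'k \<Rightarrow> real) \<Rightarrow> bool" where
  "IR q s \<longleftrightarrow> (\<forall>x\<in>orthant. payoff q s x \<ge> 0)"

definition IC :: "(real^'k \<Rightarrow> real^'k) \<Rightarrow> (real^'k \<Rightarrow> real) \<Rightarrow> bool" where
  "IC q s \<longleftrightarrow> (\<forall>x\<in>orthant. \<forall>y\<in>orthant. payoff q s x \<ge> q y \<bullet> x - s y)"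

text \<open>Borel mechanisms (q,s) with q_i(x) in [0, lam_i] on the orthant, that are IC and IR.
  With lam = (1,...,1) this is the class of all IC, IR mechanisms.\<close>
definition mechs :: "real^'k \<Rightarrow> ((real^'k \<Rightarrow> real^'k) \<times> (real^'k \<Rightarrow> real)) set" where
  "mechs lam = {(q, s). q \<in> borel_measurable borel \<and> s \<in> borel_measurable borel \<and>
      (\<forall>x\<in>orthant. \<forall>i. 0 \<le> q x $ i \<and> q x $ i \<le> lam $ i) \<and> IC q s \<and> IR q s}"

text \<open>Revenue R(mu; X) = E[s(X)], as an extended real (positive part minus negative part);
  for IC and IR mechanisms s is bounded below, so this is the well-defined expectation
  (possibly +infinity).\<close>
definition revenue :: "'a measure \<Rightarrow> ('a \<Rightarrow> real^'k) \<Rightarrow> (real^'k \<Rightarrow> real) \<Rightarrow> ereal" where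
  "revenue M X s = enn2ereal (\<integral>\<^sup>+ \<omega>. ennreal (s (X \<omega>)) \<partial>M)
                 - enn2ereal (\<integral>\<^sup>+ \<omega>. ennreal (- s (X \<omega>)) \<partial>M)"

definition Rev :: "'a measure \<Rightarrow> ('a \<Rightarrow> real^'k) \<Rightarrow> ereal" where
  "Rev M X = (SUP \<mu>\<in>mechs (\<chi> i. 1). revenue M X (snd \<mu>))"

end

theory Submission
  imports Defs
begin

definition scl :: "real^'k \<Rightarrow> real^'k \<Rightarrow> real^'k" where
  "scl c a = (\<chi> i. c $ i * a $ i)"

lemma scl_meas: "scl c \<in> borel_measurable borel"
proof -
  have "continuous_on UNIV (scl c)"
    unfolding scl_def
    by (intro continuous_on_vec_lambda continuous_intros)
  then show ?thesis by (rule borel_measurable_continuous_onI)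
qed

lemma scl_inner: "scl c a \<bullet> y = a \<bullet> scl c y"
  unfolding scl_def inner_vec_def by (auto intro!: sum.cong)

lemma scl_orthant: "\<forall>i. 0 < c $ i \<Longrightarrow> x \<in> orthant \<Longrightarrow> scl c x \<in> orthant"
  unfolding scl_def orthant_def by (auto intro: mult_nonneg_nonneg less_imp_le)

lemma transform:
  fixes c a :: "real^'k" and q :: "real^'k \<Rightarrow> real^'k"
  assumes c: "\<forall>i. 0 < c $ i" and m: "(q, s) \<in> mechs a"
  shows "(scl c \<circ> q \<circ> scl c, s \<circ> scl c) \<in> mechs (\<chi> i. c $ i * a $ i)"
proof -
  have qm: "q \<in> borel_measurable borel" and sm: "s \<in> borel_measurable borel"
    and b: "\<forall>x\<in>orthant. \<forall>i. 0 \<le> q x $ i \<and> q x $ i \<le> a $ i"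
    and ic: "IC q s" and ir: "IR q s" using m unfolding mechs_def by auto
  have pay: "payoff (scl c \<circ> q \<circ> scl c) (s \<circ> scl c) y = payoff q s (scl c y)" for y
    unfolding payoff_def by (simp add: scl_inner)
  have m1: "scl c \<circ> q \<circ> scl c \<in> borel_measurable borel"
    using qm scl_meas by (intro measurable_comp[OF _ scl_meas] measurable_comp[OF scl_meas]) auto
  have m2: "s \<circ> scl c \<in> borel_measurable borel"
    using sm by (intro measurable_comp[OF scl_meas]) auto
  have b2: "\<forall>x\<in>orthant. \<forall>i. 0 \<le> (scl c \<circ> q \<circ> scl c) x $ i \<and>
        (scl c \<circ> q \<circ> scl c) x $ i \<le> (\<chi> i. c $ i * a $ i) $ i"
  proof (intro ballI allI)
    fix x :: "real^'k" and i assume "x \<in> orthant"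
    then have "scl c x \<in> orthant" using scl_orthant c by blast
    then have "0 \<le> q (scl c x) $ i" "q (scl c x) $ i \<le> a $ i" using b by auto
    moreover have "0 < c $ i" using c by auto
    ultimately show "0 \<le> (scl c \<circ> q \<circ> scl c) x $ i \<and>
        (scl c \<circ> q \<circ> scl c) x $ i \<le> (\<chi> i. c $ i * a $ i) $ i"
      by (simp add: scl_def)
  qed
  have ic2: "IC (scl c \<circ> q \<circ> scl c) (s \<circ> scl c)"
    unfolding IC_def
  proof (intro ballI)
    fix x y :: "real^'k" assume "x \<in> orthant" "y \<in> orthant"
    then have "scl c x \<in> orthant" "scl c y \<in> orthant" using scl_orthant c by blast+
    then have "payoff q s (scl c x) \<ge> q (scl c y) \<bullet> scl c x - s (scl c y)"
      using ic unfolding IC_def by blast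
    then show "payoff (scl c \<circ> q \<circ> scl c) (s \<circ> scl c) x \<ge>
        (scl c \<circ> q \<circ> scl c) y \<bullet> x - (s \<circ> scl c) y"
      by (simp add: pay scl_inner)
  qed
  have ir2: "IR (scl c \<circ> q \<circ> scl c) (s \<circ> scl c)"
    unfolding IR_def pay using ir scl_orthant[OF c] unfolding IR_def by blast
  show ?thesis unfolding mechs_def using m1 m2 b2 ic2 ir2 by blast
qed

lemma revenue_cong:
  assumes "\<And>\<omega>. s (X \<omega>) = s' (Y \<omega>)"
  shows "revenue M X s = revenue M Y s'"
  unfolding revenue_def using assms by simp

theorem lemma1:
  fixes M :: "'a measure" and X :: "'a \<Rightarrow> real^'k" and lam :: "real^'k"
  assumes "prob_space M"
    and "X \<in> borel_measurable M"
    and "\<forall>\<omega>\<in>space M. \<forall>i. 0 \<le> X \<omega> $ i"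
    and "\<forall>i. 0 < lam $ i \<and> lam $ i \<le> 1"
  shows "Rev M X = (SUP \<mu>\<in>mechs lam. revenue M (\<lambda>\<omega>. \<chi> i. X \<omega> $ i / lam $ i) (snd \<mu>))"
proof -
  define Y where "Y = (\<lambda>\<omega>. \<chi> i. X \<omega> $ i / lam $ i)"
  have lp: "\<forall>i. 0 < lam $ i" using assms(4) by auto
  define il :: "real^'k" where "il = (\<chi> i. 1 / lam $ i)"
  have ilp: "\<forall>i. 0 < il $ i" using lp by (simp add: il_def)
  have e1: "(\<chi> i. lam $ i * (\<chi> i. (1::real)) $ i) = lam" by (simp add: vec_eq_iff)
  have e2: "(\<chi> i. il $ i * lam $ i) = (\<chi> i. (1::real))"
    using lp by (simp add: vec_eq_iff il_def ) (metis less_irrefl)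
  have sY: "scl lam (Y \<omega>) = X \<omega>" for \<omega>
    using lp by (simp add: scl_def Y_def vec_eq_iff) (metis less_irrefl)
  have sX: "scl il (X \<omega>) = Y \<omega>" for \<omega>
    by (simp add: scl_def Y_def vec_eq_iff il_def)
  have "Rev M X \<le> (SUP \<mu>\<in>mechs lam. revenue M Y (snd \<mu>))"
    unfolding Rev_def
  proof (rule SUP_least)
    fix \<mu> :: "(real^'k \<Rightarrow> real^'k) \<times> (real^'k \<Rightarrow> real)" assume "\<mu> \<in> mechs (\<chi> i. 1)"
    then obtain q :: "real^'k \<Rightarrow> real^'k" and s where qs: "\<mu> = (q, s)" "(q, s) \<in> mechs (\<chi> i. 1)" by (cases \<mu>) auto
    have mem: "(scl lam \<circ> q \<circ> scl lam, s \<circ> scl lam) \<in> mechs lam"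
      using transform[OF lp qs(2)] e1 by simp
    have "revenue M X (snd \<mu>) = revenue M Y (snd (scl lam \<circ> q \<circ> scl lam, s \<circ> scl lam))"
      using qs(1) by (auto intro!: revenue_cong simp: sY)
    also have "\<dots> \<le> (SUP \<mu>\<in>mechs lam. revenue M Y (snd \<mu>))"
      by (rule SUP_upper[OF mem])
    finally show "revenue M X (snd \<mu>) \<le> (SUP \<mu>\<in>mechs lam. revenue M Y (snd \<mu>))" .
  qed
  moreover have "(SUP \<mu>\<in>mechs lam. revenue M Y (snd \<mu>)) \<le> Rev M X"
  proof (rule SUP_least)
    fix \<mu> assume "\<mu> \<in> mechs lam"
    then obtain q :: "real^'k \<Rightarrow> real^'k" and s where qs: "\<mu> = (q, s)" "(q, s) \<in> mechs lam" by (cases \<mu>) auto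
    have mem: "(scl il \<circ> q \<circ> scl il, s \<circ> scl il) \<in> mechs (\<chi> i. 1)"
      using transform[OF ilp qs(2)] e2 by simp
    have "revenue M Y (snd \<mu>) = revenue M X (snd (scl il \<circ> q \<circ> scl il, s \<circ> scl il))"
      using qs(1) by (auto intro!: revenue_cong simp: sX)
    also have "\<dots> \<le> Rev M X"
      unfolding Rev_def by (rule SUP_upper[OF mem])
    finally show "revenue M Y (snd \<mu>) \<le> Rev M X" .
  qed
  ultimately show ?thesis unfolding Y_def[symmetric] by (rule antisym)
qed

end
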